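(* For every integer $n\ge 0$, \[ \sum_{k=0}^{n}(-4)^k\frac{\binom{n}{k}}{\binom{1+2k}{k}}H_{1+2k} =\frac{2H_{1+2n}-H_n}{2(4n^2-1)}-\frac{4n^3+8n^2+7n-2}{(4n^2-1)^2}. \]
   Context: For an integer $m\ge 0$, $H_m$ denotes the $m$-th harmonic number: $H_0=0$ and $H_m=\sum_{j=1}^m \frac1j$ for $m\ge1$. $\binom{n}{k}$ is the usual binomial coefficient. *)

theory Submission
(* identity via creative telescoping *)
  imports Defs
begin

definition aa :: "nat \<Rightarrow> nat \<Rightarrow> real" where
  "aa n k = (-4::real)^k * real (n choose k) / real ((1+2*k) choose k)"

lemma bin_pos: "real ((1+2*k) choose k) > 0"
  by simp

lemma cent_rel: "real (k+1) * real (k+2) * real ((2*k+3) choose (k+1))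
   = real (2*k+3) * real (2*k+2) * real ((1+2*k) choose k)"
proof -
  have h1: "(k+1) * ((2*k+3) choose (k+1)) = (2*k+3) * ((2*k+2) choose k)"
    using Suc_times_binomial[of k "2*k+2"] by (simp add: numeral_eq_Suc)
  have h2: "(k+1) * ((2*k+2) choose (k+1)) = (k+2) * ((2*k+2) choose k)"
    using Suc_times_binomial_add[of k "k+1"] by (simp add: numeral_eq_Suc algebra_simps)
  have h3: "(k+1) * ((2*k+2) choose (k+1)) = (2*k+2) * ((1+2*k) choose k)"
    using Suc_times_binomial[of k "2*k+1"] by (simp add: numeral_eq_Suc algebra_simps)
  have "(k+1) * (k+2) * ((2*k+3) choose (k+1)) = (2*k+3) * ((k+2) * ((2*k+2) choose k))"
    using h1 by (metis mult.assoc mult.commute)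
  also have "\<dots> = (2*k+3) * ((2*k+2) * ((1+2*k) choose k))" using h2 h3 by simp
  finally have "(k+1) * (k+2) * ((2*k+3) choose (k+1)) = (2*k+3) * (2*k+2) * ((1+2*k) choose k)"
    by (simp add: algebra_simps)
  then show ?thesis by (metis of_nat_mult)
qed

lemma row_rel: "real (k+1) * real (m choose (k+1)) = (real m - real k) * real (m choose k)"
proof (cases "k \<le> m")
  case True
  have "(k+1) * (m choose (k+1)) = (m - k) * (m choose k)"
    using binomial_absorption[of k m] binomial_absorb_comp[of m k] by simp
  then have "real ((k+1) * (m choose (k+1))) = real ((m - k) * (m choose k))" by simp
  then show ?thesis by (metis of_nat_mult of_nat_diff True)
next
  case False then show ?thesis by (simp add: binomial_eq_0)
qed

lemma col_rel: "real (Suc n) * real (n choose k) = (real (Suc n) - real k) * real (Suc n choose k)"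
proof (cases "k \<le> Suc n")
  case True
  have "(Suc n - k) * (Suc n choose k) = Suc n * (n choose k)"
    using binomial_absorb_comp[of "Suc n" k] by simp
  then have "real ((Suc n - k) * (Suc n choose k)) = real (Suc n * (n choose k))" by simp
  then show ?thesis by (metis of_nat_mult of_nat_diff True)
next
  case False then show ?thesis by (simp add: binomial_eq_0)
qed

lemma abs_step:
  fixes B0 B1 x x1 p k m :: real
  assumes "B0 > 0" "B1 > 0" "(k+2)*B1 = 2*(2*k+3)*B0" "(k+1)*x1 = (m-k)*x"
  shows "(k+1)*(2*k+3)*((-4)*p*x1/B1) = -2*(m-k)*(k+2)*(p*x/B0)"
proof -
  have "(k+1)*(2*k+3)*((-4)*p*x1/B1) = -4*(2*k+3)*p*((k+1)*x1)/B1" using assms(2) by (simp add: field_simps)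
  also have "\<dots> = -4*(2*k+3)*p*((m-k)*x)/B1" using assms(4) by simp
  also have "\<dots> = -2*(m-k)*p*x*(2*(2*k+3))/B1" by (simp add: algebra_simps)
  also have "2*(2*k+3) = (k+2)*B1/B0" using assms(1,3) by (simp add: field_simps)
  also have "-2*(m-k)*p*x*((k+2)*B1/B0)/B1 = -2*(m-k)*(k+2)*(p*x/B0)" using assms(1,2) by (simp add: field_simps)
  finally show ?thesis .
qed

lemma aa_step: "real (k+1) * real (2*k+3) * aa m (k+1) = -2 * (real m - real k) * real (k+2) * aa m k"
proof -
  have e: "1 + 2 * (k+1) = 2*k+3" by simp
  have c: "real (k+2) * real ((2*k+3) choose (k+1)) = 2 * (2 * real k + 3) * real ((1+2*k) choose k)"
  proof -
    have "real (k+1) * (real (k+2) * real ((2*k+3) choose (k+1))) = real (k+1) * (2 * (2 * real k + 3) * real ((1+2*k) choose k))"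
      using cent_rel[of k] by (simp add: algebra_simps)
    moreover have "real (k+1) \<noteq> 0" by simp
    ultimately show ?thesis by (metis mult_cancel_left)
  qed
  have "(real k + 1) * (2 * real k + 3) * ((-4) * (-4)^k * real (m choose (k+1)) / real ((2*k+3) choose (k+1)))
     = -2 * (real m - real k) * (real k + 2) * ((-4)^k * real (m choose k) / real ((1+2*k) choose k))"
    apply (rule abs_step)
    using c row_rel[of k m] by (simp_all add: algebra_simps)
  then show ?thesis unfolding aa_def e by (simp add: ac_simps)
qed

lemma aa_col: "real (Suc n) * aa n k = (real (Suc n) - real k) * aa (Suc n) k"
proof -
  have "real (Suc n) * aa n k = ((-4)^k / real ((1+2*k) choose k)) * (real (Suc n) * real (n choose k))"
    unfolding aa_def by simp
  also have "\<dots> = ((-4)^k / real ((1+2*k) choose k)) * ((real (Suc n) - real k) * real (Suc n choose k))"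
    using col_rel by simp
  also have "\<dots> = (real (Suc n) - real k) * aa (Suc n) k" unfolding aa_def by simp
  finally show ?thesis .
qed


lemma abs_tel:
  fixes x y z H N K :: real
  assumes N: "N \<ge> 0" and K: "K \<ge> 0"
    and hy: "(K+1)*(2*K+3)*y = -2*(N+1-K)*(K+2)*x"
    and hz: "(N+1)*z = (N+1-K)*x"
  shows "y/(N+1)*(-((K+1)*(2*K+3))*(H + 1/(2*K+2) + 1/(2*K+3)) + (4*K+5)/2)
       - x/(N+1)*(-(K*(2*K+1))*H + (4*K+1)/2)
       = (2*N+3)*x*H - (2*N-1)*z*H + 2*z - (2+1/(2*(N+1)))*x"
proof -
  have d: "(K+1)*(2*K+3) \<noteq> 0" using K by simp
  have y: "y = -2*(N+1-K)*(K+2)*x/((K+1)*(2*K+3))" using hy d by (simp add: eq_divide_eq mult.commute)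
  have z: "z = (N+1-K)*x/(N+1)" using hz N by (simp add: field_simps)
  have n1: "N+1 \<noteq> 0" "2*K+2 \<noteq> 0" "2*K+3 \<noteq> 0" "K+1 \<noteq> 0" "2*(N+1) \<noteq> 0" using N K by auto
  have e1: "-((K+1)*(2*K+3))*(H + 1/(2*K+2) + 1/(2*K+3)) + (4*K+5)/2 = -((K+1)*(2*K+3))*H"
  proof -
    have a: "(K+1)*(2*K+3)*(1/(2*K+2)) = (2*K+3)/2" using n1 by (simp add: field_simps)
    have b: "(K+1)*(2*K+3)*(1/(2*K+3)) = K+1" using n1 by (simp add: field_simps)
    have "-((K+1)*(2*K+3))*(H + 1/(2*K+2) + 1/(2*K+3)) = -((K+1)*(2*K+3))*H
       - (K+1)*(2*K+3)*(1/(2*K+2)) - (K+1)*(2*K+3)*(1/(2*K+3))" by (simp add: algebra_simps)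
    then show ?thesis unfolding a b by simp
  qed
  have "y/(N+1)*(-((K+1)*(2*K+3))*H) = -(H/(N+1))*((K+1)*(2*K+3)*y)" by simp
  also have "\<dots> = -(H/(N+1))*(-2*(N+1-K)*(K+2)*x)" using hy by simp
  finally have e2: "y/(N+1)*(-((K+1)*(2*K+3))*H) = -(H/(N+1))*(-2*(N+1-K)*(K+2)*x)" .
  have fin: "-(H/(N+1))*(-2*(N+1-K)*(K+2)*x) - x/(N+1)*(-(K*(2*K+1))*H + (4*K+1)/2)
     = (2*N+3)*x*H - (2*N-1)*((N+1-K)*x/(N+1))*H + 2*((N+1-K)*x/(N+1)) - (2+1/(2*(N+1)))*x"
  proof -
    have "(N+1) * (-(H/(N+1))*(-2*(N+1-K)*(K+2)*x) - x/(N+1)*(-(K*(2*K+1))*H + (4*K+1)/2))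
      = 2*H*(N+1-K)*(K+2)*x + x*(K*(2*K+1)*H - (4*K+1)/2)"
    proof -
      have d1: "(N+1) * (-(H/(N+1))*(-2*(N+1-K)*(K+2)*x)) = 2*H*(N+1-K)*(K+2)*x"
      proof -
        have "(N+1) * (-(H/(N+1))*(-2*(N+1-K)*(K+2)*x)) = -(H*(-2*(N+1-K)*(K+2)*x))"
          using n1 by (simp only: mult_minus_left mult_minus_right times_divide_eq_right) simp
        then show ?thesis by (simp add: algebra_simps)
      qed
      have d2: "(N+1) * (x/(N+1)*(-(K*(2*K+1))*H + (4*K+1)/2)) = - (x*(K*(2*K+1)*H - (4*K+1)/2))"
        using n1 by simp (simp add: right_diff_distrib)
      show ?thesis by (subst right_diff_distrib, subst d1, subst d2) simp
    qed
    also have "\<dots> = (N+1)*(2*N+3)*x*H - (2*N-1)*((N+1-K)*x)*H + 2*((N+1-K)*x) - 2*(N+1)*x - (1/2)*x"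
      by (simp add: algebra_simps)
    also have "\<dots> = (N+1) * ((2*N+3)*x*H - (2*N-1)*((N+1-K)*x/(N+1))*H + 2*((N+1-K)*x/(N+1)) - (2+1/(2*(N+1)))*x)"
    proof -
      have c1: "(N+1)*((N+1-K)*x/(N+1)) = (N+1-K)*x" using n1 by simp
      have c2: "(N+1)*(1/(2*(N+1))) = 1/2" using n1 by simp
      have "(N+1) * ((2*N+3)*x*H - (2*N-1)*((N+1-K)*x/(N+1))*H + 2*((N+1-K)*x/(N+1)) - (2+1/(2*(N+1)))*x)
        = (N+1)*(2*N+3)*x*H - (2*N-1)*((N+1)*((N+1-K)*x/(N+1)))*H + 2*((N+1)*((N+1-K)*x/(N+1))) - 2*(N+1)*x - ((N+1)*(1/(2*(N+1))))*x"
        by (simp only: ring_distribs mult_ac)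
      then show ?thesis unfolding c1 c2 by simp
    qed
    finally show ?thesis using n1 by simp
  qed
  show ?thesis unfolding e1 e2 z using fin .
qed


lemma abs_tel0:
  fixes x y z N K :: real
  assumes N: "N \<ge> 0" and K: "K \<ge> 0"
    and hy: "(K+1)*(2*K+3)*y = -2*(N+1-K)*(K+2)*x"
    and hz: "(N+1)*z = (N+1-K)*x"
  shows "y/(N+1)*(-((K+1)*(2*K+3))) - x/(N+1)*(-(K*(2*K+1))) = (2*N+3)*x - (2*N-1)*z"
  using abs_tel[OF assms, of 1] abs_tel[OF assms, of 0] by (simp add: algebra_simps)

lemma aa_zero: "k > n \<Longrightarrow> aa n k = 0"
  by (simp add: aa_def binomial_eq_0)

lemma aa_0: "aa n 0 = 1" by (simp add: aa_def)

lemma harm_step: "harm (2 * Suc k + 1) = (harm (2*k+1) :: real) + 1/(2*real k+2) + 1/(2*real k+3)"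
proof -
  have e: "2 * Suc k + 1 = Suc (Suc (2*k+1))" by simp
  show ?thesis unfolding e harm_Suc by (simp add: field_simps add_ac)
qed

definition F1 :: "nat \<Rightarrow> nat \<Rightarrow> real" where
  "F1 n k = aa (Suc n) k/(real n+1)*(-(real k*(2*real k+1))*harm(2*k+1) + (4*real k+1)/2)"

definition F0 :: "nat \<Rightarrow> nat \<Rightarrow> real" where
  "F0 n k = aa (Suc n) k/(real n+1)*(-(real k*(2*real k+1)))"

lemma hyps_aa:
  "(real k+1)*(2*real k+3)*aa (Suc n) (Suc k) = -2*(real n+1-real k)*(real k+2)*aa (Suc n) k"
  "(real n+1)*aa n k = (real n+1-real k)*aa (Suc n) k"
proof -
  show "(real k+1)*(2*real k+3)*aa (Suc n) (Suc k) = -2*(real n+1-real k)*(real k+2)*aa (Suc n) k"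
    using aa_step[of k "Suc n"] by (simp add: add_ac)
  show "(real n+1)*aa n k = (real n+1-real k)*aa (Suc n) k"
    using aa_col[of n k] by (simp add: add_ac)
qed

lemma tel1: "F1 n (Suc k) - F1 n k = (2*real n+3)*aa (Suc n) k*harm(2*k+1) - (2*real n-1)*aa n k*harm(2*k+1)
    + 2*aa n k - (2+1/(2*(real n+1)))*aa (Suc n) k"
proof -
  have A: "F1 n (Suc k) = aa (Suc n) (Suc k)/(real n+1)*(-((real k+1)*(2*real k+3))*(harm (2*k+1) + 1/(2*real k+2) + 1/(2*real k+3)) + (4*real k+5)/2)"
    unfolding F1_def harm_step by (simp add: algebra_simps)
  have B: "F1 n k = aa (Suc n) k/(real n+1)*(-(real k*(2*real k+1))*harm(2*k+1) + (4*real k+1)/2)"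
    by (rule F1_def)
  show ?thesis unfolding A B by (rule abs_tel[OF _ _ hyps_aa]) simp_all
qed

lemma tel0: "F0 n (Suc k) - F0 n k = (2*real n+3)*aa (Suc n) k - (2*real n-1)*aa n k"
proof -
  have A: "F0 n (Suc k) = aa (Suc n) (Suc k)/(real n+1)*(-((real k+1)*(2*real k+3)))"
    unfolding F0_def by (simp add: algebra_simps)
  have B: "F0 n k = aa (Suc n) k/(real n+1)*(-(real k*(2*real k+1)))"
    by (rule F0_def)
  show ?thesis unfolding A B by (rule abs_tel0[OF _ _ hyps_aa]) simp_all
qed


definition S :: "nat \<Rightarrow> real" where "S n = (\<Sum>k=0..n. aa n k * harm (2*k+1))"
definition S0 :: "nat \<Rightarrow> real" where "S0 n = (\<Sum>k=0..n. aa n k)"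

lemma ext_sum: "(\<Sum>k=0..Suc n. aa n k * f k) = (\<Sum>k=0..n. aa n k * f k)"
  by (simp add: aa_zero)

lemma ext_sum0: "(\<Sum>k=0..Suc n. aa n k) = (\<Sum>k=0..n. aa n k)"
  by (simp add: aa_zero)

lemma rec0: "(2*real n+3) * S0 (Suc n) - (2*real n-1) * S0 n = 0"
proof -
  have "(\<Sum>k=0..Suc n. F0 n (Suc k) - F0 n k) = F0 n (Suc (Suc n)) - F0 n 0"
    by (rule sum_Suc_diff) simp
  also have "\<dots> = 0" by (simp add: F0_def aa_zero)
  finally have "(\<Sum>k=0..Suc n. (2*real n+3)*aa (Suc n) k - (2*real n-1)*aa n k) = 0"
    unfolding tel0 .
  then show ?thesis unfolding S0_def sum_subtractf sum_distrib_left[symmetric] ext_sum0 .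
qed

lemma rec1: "(2*real n+3) * S (Suc n) - (2*real n-1) * S n + 2 * S0 n - (2+1/(2*(real n+1))) * S0 (Suc n)
   = - 1/(2*(real n+1))"
proof -
  have "(\<Sum>k=0..Suc n. F1 n (Suc k) - F1 n k) = F1 n (Suc (Suc n)) - F1 n 0"
    by (rule sum_Suc_diff) simp
  also have "\<dots> = - 1/(2*(real n+1))" by (simp add: F1_def aa_zero aa_0)
  finally have "(\<Sum>k=0..Suc n. (2*real n+3)*aa (Suc n) k*harm(2*k+1) - (2*real n-1)*aa n k*harm(2*k+1)
    + 2*aa n k - (2+1/(2*(real n+1)))*aa (Suc n) k) = - 1/(2*(real n+1))"
    unfolding tel1 .
  then show ?thesis unfolding S0_def S_def sum.distrib sum_subtractf mult.assoc sum_distrib_left[symmetric] ext_sum0 ext_sum .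
qed

lemma S0_closed: "S0 n = - 1 / (4 * real n ^ 2 - 1)"
proof (induction n)
  case 0 then show ?case by (simp add: S0_def aa_0)
next
  case (Suc n)
  have "S0 (Suc n) = (2*real n-1) * S0 n / (2*real n+3)"
    using rec0[of n] by (simp add: field_simps)
  also have "\<dots> = - 1 / (4 * real (Suc n) ^ 2 - 1)"
  proof -
    have d1: "4 * real n ^ 2 - 1 = (2*real n - 1)*(2*real n+1)" by (simp add: algebra_simps power2_eq_square)
    have d2: "4 * real (Suc n) ^ 2 - 1 = (2*real n + 1)*(2*real n+3)" by (simp add: algebra_simps power2_eq_square)
    have "2*real n - 1 \<noteq> 0"
    proof
      assume "2*real n - 1 = 0" then have "real (2*n) = 1" by simp
      then have "2*n = 1" by linarith
      then show False by presburger
    qed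
    then have "(2*real n-1) * (- 1 / ((2*real n - 1)*(2*real n+1))) = - 1/(2*real n+1)"
      by simp
    then show ?thesis unfolding Suc d1 d2 by simp

  qed
  finally show ?case .
qed


lemma abs_main0:
  fixes N h g a b c d :: real
  assumes nz: "a \<noteq> 0" "b \<noteq> 0" "c \<noteq> 0" "d \<noteq> 0"
    and ea: "a = 2*N-1" and eb: "b = 2*N+1" and ec: "c = 2*N+3" and ed: "d = N+1"
  shows "(a * ((2*h - g)/(2*(a*b)) - (4*N^3+8*N^2+7*N-2)/(a*b)^2)
          - 2 * (-1/(a*b)) + (2+1/(2*d)) * (-1/(b*c)) - 1/(2*d)) / c
       = (2*(h + 1/(2*d) + 1/c) - (g + 1/d))/(2*(b*c))
          - (4*d^3+8*d^2+7*d-2)/(b*c)^2"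
  using nz
  apply (simp add: field_simps)
  apply (simp only: ea eb ec ed)
  apply algebra
  done


lemma S_closed: "S n = (2 * harm (1+2*n) - harm n) / (2 * (4 * real n ^ 2 - 1))
      - (4 * real n ^ 3 + 8 * real n ^ 2 + 7 * real n - 2) / (4 * real n ^ 2 - 1) ^ 2"
proof (induction n)
  case 0 then show ?case by (simp add: S_def aa_0 harm_Suc harm_def)
next
  case (Suc n)
  define N where "N = real n"
  have N0: "N \<ge> 0" unfolding N_def by simp
  have a0: "2*N - 1 \<noteq> 0"
  proof
    assume "2*N - 1 = 0" then have "real (2*n) = 1" unfolding N_def by simp
    then have "2*n = 1" by linarith
    then show False by presburger
  qed
  have b0: "2*N+1 \<noteq> 0" "2*N+3 \<noteq> 0" "N+1 \<noteq> 0" using N0 by auto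
  have rs: "S (Suc n) = ((2*N-1) * S n - 2 * S0 n + (2+1/(2*(N+1))) * S0 (Suc n) - 1/(2*(N+1))) / (2*N+3)"
  proof -
    have "(2*N+3) * S (Suc n) = (2*N-1) * S n - 2 * S0 n + (2+1/(2*(N+1))) * S0 (Suc n) - 1/(2*(N+1))"
      using rec1[of n] unfolding N_def by linarith
    then show ?thesis using b0(2) by (simp add: eq_divide_eq mult.commute)
  qed
  have q1: "4 * real n ^ 2 - 1 = (2*N-1)*(2*N+1)" unfolding N_def by (simp add: algebra_simps power2_eq_square)
  have q2: "4 * real (Suc n) ^ 2 - 1 = (2*N+1)*(2*N+3)" unfolding N_def by (simp add: algebra_simps power2_eq_square)
  have q3: "real (Suc n) = N+1" unfolding N_def by simp
  have h1: "harm (1 + 2 * Suc n) = (harm (1+2*n)::real) + 1/(2*(N+1)) + 1/(2*N+3)"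
    using harm_step[of n] unfolding N_def by (simp add: add_ac algebra_simps)
  have h2: "harm (Suc n) = (harm n::real) + 1/(N+1)"
    unfolding N_def harm_Suc by (simp add: divide_inverse add_ac)
  have IH: "S n = (2 * harm (1+2*n) - harm n) / (2 * ((2*N-1)*(2*N+1)))
      - (4 * N ^ 3 + 8 * N ^ 2 + 7 * N - 2) / ((2*N-1)*(2*N+1)) ^ 2"
    using Suc.IH unfolding q1 N_def .
  have s0: "S0 n = -1/((2*N-1)*(2*N+1))" using S0_closed[of n] unfolding q1 by simp
  have s0': "S0 (Suc n) = -1/((2*N+1)*(2*N+3))" using S0_closed[of "Suc n"] unfolding q2 by simp
  have q2': "4 * (N+1) ^ 2 - 1 = (2*N+1)*(2*N+3)" by (simp add: algebra_simps power2_eq_square)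
  show ?case unfolding rs h1 h2 IH s0 s0' unfolding q3 unfolding q2'
    by (rule abs_main0[OF a0 b0(1) b0(2) b0(3)]) simp_all
qed

theorem theorem4:
  fixes n :: nat
  shows "(\<Sum>k=0..n. (-4::real)^k * real (n choose k) / real ((1+2*k) choose k) * harm (1+2*k))
    = (2 * harm (1+2*n) - harm n) / (2 * (4 * real n ^ 2 - 1))
      - (4 * real n ^ 3 + 8 * real n ^ 2 + 7 * real n - 2) / (4 * real n ^ 2 - 1) ^ 2"
proof -
  have "(\<Sum>k=0..n. (-4::real)^k * real (n choose k) / real ((1+2*k) choose k) * harm (1+2*k)) = S n"
    unfolding S_def aa_def by (simp add: add_ac)
  then show ?thesis using S_closed by simp
qed

end
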